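(* Let $a\ge2$ and $0\le\mu\le a-1$ be integers and $u\in\mathbb R$. For an integer $0\le j\le a-1$ and real $v$ let $$I_{n,j}(v)=\frac1{2\pi i}\int_L\frac{n!^a}{\Gamma^{a-1}(t+1)\Gamma^a(n-t+1)}\Bigl(\frac{\pi}{\sin\pi t}\Bigr)^{j+1}e^{i\pi tv}\,dt,$$ where $L$ is a loop beginning and ending at $-\infty$ and encircling the points $n,n-1,n-2,\ldots$ once in the positive direction. Then for each $n=0,1,2,\ldots$ $$I_{n,\mu}(u)=\frac1{(2\pi i)^{a-\mu-1}}\sum_{k=0}^{a-\mu-1}(-1)^k\binom{a-\mu-1}{k}I_{n,a-1}(a+u-\mu-1-2k).$$ *)

theory Defs
  imports "HOL-Complex_Analysis.Complex_Analysis"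
begin

definition integrandI :: "nat \<Rightarrow> nat \<Rightarrow> nat \<Rightarrow> real \<Rightarrow> complex \<Rightarrow> complex" where
  "integrandI a n j v t =
     of_nat (fact n) ^ a / (Gamma (t + 1) ^ (a - 1) * Gamma (of_nat n - t + 1) ^ a)
     * (of_real pi / sin (of_real pi * t)) ^ (j + 1)
     * exp (\<i> * of_real pi * t * of_real v)"

text \<open>Truncation at real part -R of the concrete loop L: it comes in from -infinity along
  Im t = -1/2, goes up along Re t = n + 1/2 and returns to -infinity along Im t = 1/2,
  i.e. it encircles n, n-1, n-2, ... once in the positive (counterclockwise) direction.\<close>
definition loopL :: "nat \<Rightarrow> real \<Rightarrow> real \<Rightarrow> complex" where
  "loopL n R =
     linepath (Complex (-R) (-1/2)) (Complex (real n + 1/2) (-1/2)) +++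
     linepath (Complex (real n + 1/2) (-1/2)) (Complex (real n + 1/2) (1/2)) +++
     linepath (Complex (real n + 1/2) (1/2)) (Complex (-R) (1/2))"

definition Iint :: "nat \<Rightarrow> nat \<Rightarrow> nat \<Rightarrow> real \<Rightarrow> complex" where
  "Iint a n j v = (1 / (2 * of_real pi * \<i>)) *
     Lim at_top (\<lambda>R. contour_integral (loopL n R) (integrandI a n j v))"

end

theory Submission
  imports Defs
begin

lemma integrand_alt:
  "integrandI a n j v t = of_nat (fact n) ^ a * rGamma (t + 1) ^ (a - 1) * rGamma (of_nat n - t + 1) ^ a
     * (of_real pi / sin (of_real pi * t)) ^ (j + 1) * exp (\<i> * of_real pi * t * of_real v)"
  unfolding integrandI_def Gamma_def
  by (simp add: divide_inverse power_inverse inverse_mult_distrib)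

lemma exp_split:
  fixes m k :: nat and u :: real and t :: complex
  assumes "k \<le> m"
  shows "exp (\<i> * of_real pi * t * of_real (real m + u - 2 * real k)) =
     exp (\<i> * of_real pi * t * of_real u) * exp (\<i> * of_real pi * t) ^ (m - k) * exp (- (\<i> * of_real pi * t)) ^ k"
proof -
  define z where "z = \<i> * of_real pi * t"
  have "z * of_real (real m + u - 2 * real k) =
     z * of_real u + of_nat (m - k) * z + of_nat k * (- z)"
    using assms by (simp add: of_nat_diff algebra_simps)
  then have "exp (z * of_real (real m + u - 2 * real k)) = exp (z * of_real u + of_nat (m - k) * z + of_nat k * (- z))"
    by simp
  also have "\<dots> = exp (z * of_real u) * exp (of_nat (m - k) * z) * exp (of_nat k * (- z))"
    by (simp only: exp_add)
  also have "\<dots> = exp (z * of_real u) * exp z ^ (m - k) * exp (- z) ^ k"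
    by (simp only: exp_of_nat_mult)
  finally show ?thesis unfolding z_def .
qed


lemma binom_sum:
  fixes X Y :: complex
  shows "(\<Sum>k = 0..m. (-1) ^ k * of_nat (m choose k) * (X ^ (m - k) * Y ^ k)) = (X - Y) ^ m"
proof -
  have "(X - Y) ^ m = (- Y + X) ^ m" by simp
  also have "\<dots> = (\<Sum>k\<le>m. of_nat (m choose k) * (- Y) ^ k * X ^ (m - k))"
    by (rule binomial_ring)
  also have "\<dots> = (\<Sum>k = 0..m. (-1) ^ k * of_nat (m choose k) * (X ^ (m - k) * Y ^ k))"
    unfolding atLeast0AtMost
  proof (rule sum.cong)
    fix k
    have "(- Y) ^ k = (-1) ^ k * Y ^ k" by (rule power_minus)
    then show "of_nat (m choose k) * (- Y) ^ k * X ^ (m - k) = (-1) ^ k * of_nat (m choose k) * (X ^ (m - k) * Y ^ k)"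
      by (simp only: mult_ac)
  qed simp
  finally show ?thesis by simp
qed

lemma sin_via_exp: "exp (\<i> * z) - exp (- (\<i> * z)) = 2 * \<i> * sin z"
proof -
  have "2 * \<i> * sin z = 2 * \<i> * ((exp (\<i> * z) - exp (- (\<i> * z))) / (2 * \<i>))"
    by (simp only: sin_exp_eq)
  also have "\<dots> = exp (\<i> * z) - exp (- (\<i> * z))" by simp
  finally show ?thesis by simp
qed


lemma q_power:
  fixes s :: complex and a \<mu> m :: nat
  assumes "\<mu> + 1 + m = a" "a \<ge> 2"
  shows "(of_real pi / s) ^ a * (2 * \<i> * s) ^ m / (2 * of_real pi * \<i>) ^ m = (of_real pi / s) ^ (\<mu> + 1)"
proof (cases "s = 0")
  case True
  then show ?thesis using assms by (simp add: power_0_left)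
next
  case False
  have pi0: "(of_real pi :: complex) \<noteq> 0" by simp
  have "(of_real pi / s) ^ a = (of_real pi / s) ^ (\<mu> + 1) * (of_real pi / s) ^ m"
    unfolding assms(1)[symmetric] by (rule power_add)
  moreover have "(of_real pi / s) ^ m * (2 * \<i> * s) ^ m / (2 * of_real pi * \<i>) ^ m = 1"
  proof -
    have "(of_real pi / s) * (2 * \<i> * s) / (2 * of_real pi * \<i>) = 1"
      using False pi0 by (simp add: field_simps)
    then have "((of_real pi / s) * (2 * \<i> * s) / (2 * of_real pi * \<i>)) ^ m = 1" by simp
    moreover have "((of_real pi / s) * (2 * \<i> * s) / (2 * of_real pi * \<i>)) ^ m = (of_real pi / s) ^ m * (2 * \<i> * s) ^ m / (2 * of_real pi * \<i>) ^ m"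
      by (simp only: power_mult_distrib power_divide)
    ultimately show ?thesis by simp
  qed
  ultimately show ?thesis by (simp add: field_simps)
qed

lemma pointwise:
  fixes a \<mu> n :: nat and u :: real and t :: complex
  assumes "a \<ge> 2" and "\<mu> \<le> a - 1"
  shows "integrandI a n \<mu> u t = 1 / (2 * of_real pi * \<i>) ^ (a - \<mu> - 1) *
    (\<Sum>k = 0..a - \<mu> - 1. (-1) ^ k * of_nat ((a - \<mu> - 1) choose k) *
        integrandI a n (a - 1) (real a + u - real \<mu> - 1 - 2 * real k) t)"
proof -
  define m where "m = a - \<mu> - 1"
  define A where "A = of_nat (fact n) ^ a * rGamma (t + 1) ^ (a - 1) * rGamma (of_nat n - t + 1) ^ a"
  define q where "q = of_real pi / sin (of_real pi * t)"
  define X where "X = exp (\<i> * of_real pi * t)"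
  define Y where "Y = exp (- (\<i> * of_real pi * t))"
  define E where "E = exp (\<i> * of_real pi * t * of_real u)"
  have am: "\<mu> + 1 + m = a" using assms unfolding m_def by simp
  have a1: "a - 1 + 1 = a" using assms by simp
  have tm: "integrandI a n (a - 1) (real a + u - real \<mu> - 1 - 2 * real k) t = A * q ^ a * E * (X ^ (m - k) * Y ^ k)"
    if "k \<le> m" for k
  proof -
    have e: "real a + u - real \<mu> - 1 - 2 * real k = real m + u - 2 * real k"
      using am by (simp add: m_def of_nat_diff)
    show ?thesis
      unfolding integrand_alt e exp_split[OF that] A_def q_def E_def X_def Y_def a1
      by (simp only: mult_ac)
  qed
  have "(\<Sum>k = 0..m. (-1) ^ k * of_nat (m choose k) *
        integrandI a n (a - 1) (real a + u - real \<mu> - 1 - 2 * real k) t)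
      = (\<Sum>k = 0..m. A * q ^ a * E * ((-1) ^ k * of_nat (m choose k) * (X ^ (m - k) * Y ^ k)))"
  proof (rule sum.cong)
    fix k assume "k \<in> {0..m}"
    then have k: "k \<le> m" by simp
    show "(-1) ^ k * of_nat (m choose k) * integrandI a n (a - 1) (real a + u - real \<mu> - 1 - 2 * real k) t
      = A * q ^ a * E * ((-1) ^ k * of_nat (m choose k) * (X ^ (m - k) * Y ^ k))"
      unfolding tm[OF k] by (simp only: mult_ac)
  qed simp
  also have "\<dots> = A * q ^ a * E * (X - Y) ^ m"
    by (simp add: sum_distrib_left[symmetric] binom_sum)
  also have "X - Y = 2 * \<i> * sin (of_real pi * t)"
    unfolding X_def Y_def using sin_via_exp[of "of_real pi * t"] by (simp add: mult.assoc)
  finally have S: "(\<Sum>k = 0..m. (-1) ^ k * of_nat (m choose k) *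
        integrandI a n (a - 1) (real a + u - real \<mu> - 1 - 2 * real k) t)
      = A * E * (q ^ a * (2 * \<i> * sin (of_real pi * t)) ^ m)" by (simp add: mult_ac)
  have L: "integrandI a n \<mu> u t = A * E * q ^ (\<mu> + 1)"
    unfolding integrand_alt A_def q_def E_def by (simp add: mult_ac)
  show ?thesis
    unfolding m_def[symmetric] S L
    using q_power[OF am assms(1), of "sin (of_real pi * t)"] unfolding q_def[symmetric]
    by (simp add: field_simps)
qed


lemma sin_pi_nonzero:
  fixes t :: complex
  assumes "Im t \<noteq> 0 \<or> Re t = real n + 1/2"
  shows "sin (of_real pi * t) \<noteq> 0"
proof
  assume "sin (of_real pi * t) = 0"
  then obtain k :: int where k: "of_real pi * t = of_real (of_int k * pi)"
    by (auto simp: sin_eq_0)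
  then have "t = of_int k"
    by (simp add: field_simps)
  then have im: "Im t = 0" and re: "Re t = of_int k" by simp_all
  show False
  proof (cases "Im t \<noteq> 0")
    case True then show ?thesis using im by simp
  next
    case False
    then have "real_of_int k = real n + 1/2" using assms re by simp
    then have "real_of_int (2 * k) = real_of_int (2 * int n + 1)" by simp
    then have "2 * k = 2 * int n + 1" by (simp only: of_int_eq_iff)
    then show ?thesis by presburger
  qed
qed

lemma segment_Im:
  assumes "x \<in> closed_segment p q" "Im p = y" "Im q = y"
  shows "Im x = y"
proof -
  obtain u where u: "x = (1 - u) *\<^sub>R p + u *\<^sub>R q" "0 \<le> u" "u \<le> 1"
    using assms(1) unfolding closed_segment_def by auto
  then have "Im x = (1 - u) * Im p + u * Im q" by simp
  also have "\<dots> = y" using assms by (simp add: algebra_simps)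
  finally show ?thesis .
qed

lemma segment_Re:
  assumes "x \<in> closed_segment p q" "Re p = y" "Re q = y"
  shows "Re x = y"
proof -
  obtain u where u: "x = (1 - u) *\<^sub>R p + u *\<^sub>R q" "0 \<le> u" "u \<le> 1"
    using assms(1) unfolding closed_segment_def by auto
  then have "Re x = (1 - u) * Re p + u * Re q" by simp
  also have "\<dots> = y" using assms by (simp add: algebra_simps)
  finally show ?thesis .
qed

lemma norm_sin_lower:
  fixes z :: complex
  shows "\<bar>exp (Im z) - exp (- Im z)\<bar> / 2 \<le> norm (sin z)"
proof -
  define A where "A = exp (Im z)"
  define B where "B = exp (- Im z)"
  define r where "r = Re z"
  have AB: "A * B = 1" unfolding A_def B_def by (simp add: exp_add[symmetric])
  have sc: "sin r ^ 2 + cos r ^ 2 = 1" by simp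
  have re: "Re (sin z) = sin r * (A + B) / 2" unfolding A_def B_def r_def by (simp add: Re_sin)
  have im: "Im (sin z) = cos r * (A - B) / 2" unfolding A_def B_def r_def by (simp add: Im_sin)
  have sq: "(A + B) ^ 2 = (A - B) ^ 2 + 4" using AB by algebra
  have "Re (sin z) ^ 2 + Im (sin z) ^ 2 = sin r ^ 2 * (A + B) ^ 2 / 4 + cos r ^ 2 * (A - B) ^ 2 / 4"
    unfolding re im by (simp add: power_mult_distrib power_divide)
  also have "\<dots> = (A - B) ^ 2 / 4 + sin r ^ 2"
  proof -
    have gen: "S * (D + 4) / 4 + (1 - S) * D / 4 = D / 4 + S" for S D :: real
      by (simp add: field_simps)
    have c2: "cos r ^ 2 = 1 - sin r ^ 2" using sc by linarith
    show ?thesis unfolding sq c2 gen ..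
  qed
  finally have eq: "Re (sin z) ^ 2 + Im (sin z) ^ 2 = (A - B) ^ 2 / 4 + sin r ^ 2" .
  have "(\<bar>A - B\<bar> / 2) ^ 2 \<le> Re (sin z) ^ 2 + Im (sin z) ^ 2"
    unfolding eq by (simp add: power_divide power2_abs)
  then have "\<bar>A - B\<bar> / 2 \<le> sqrt (Re (sin z) ^ 2 + Im (sin z) ^ 2)"
    by (rule real_le_rsqrt)
  then show ?thesis unfolding A_def B_def cmod_def by simp
qed

lemma rGamma_bounded_line:
  fixes y :: real
  obtains M where "M \<ge> 0" "\<And>z. 1 \<le> Re z \<Longrightarrow> Im z = y \<Longrightarrow> norm (rGamma z) \<le> M"
proof -
  define h where "h = (\<lambda>s::real. rGamma (of_real s + \<i> * of_real y))"
  have "continuous_on {1..2} h"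
    unfolding h_def by (intro continuous_at_imp_continuous_on ballI continuous_intros)
  then have "compact (h ` {1..2})"
    by (intro compact_continuous_image) auto
  then have "bounded (h ` {1..2})" by (rule compact_imp_bounded)
  then obtain M0 where M0: "\<And>x. x \<in> h ` {1..2} \<Longrightarrow> norm x \<le> M0"
    unfolding bounded_iff by blast
  define M where "M = max M0 0"
  have base: "norm (rGamma z) \<le> M" if "1 \<le> Re z" "Re z \<le> 2" "Im z = y" for z
  proof -
    have "z = of_real (Re z) + \<i> * of_real y" using that by (simp add: complex_eq_iff)
    then have "rGamma z \<in> h ` {1..2}" unfolding h_def using that by force
    then show ?thesis using M0 unfolding M_def by force
  qed
  have ind: "\<forall>z. 1 \<le> Re z \<longrightarrow> Re z \<le> real N + 2 \<longrightarrow> Im z = y \<longrightarrow> norm (rGamma z) \<le> M" for N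
  proof (induction N)
    case 0
    then show ?case using base by simp
  next
    case (Suc N)
    show ?case
    proof (intro allI impI)
      fix z :: complex assume z: "1 \<le> Re z" "Re z \<le> real (Suc N) + 2" "Im z = y"
      show "norm (rGamma z) \<le> M"
      proof (cases "Re z \<le> real N + 2")
        case True then show ?thesis using Suc.IH z by blast
      next
        case False
        define w where "w = z - 1"
        have w1: "1 \<le> Re w" "Re w \<le> real N + 2" "Im w = y" using False z unfolding w_def by auto
        have nw: "1 \<le> norm w" using w1(1) complex_Re_le_cmod[of w] by linarith
        have "w * rGamma (w + 1) = rGamma w" by (rule rGamma_plus1)
        then have "norm w * norm (rGamma z) = norm (rGamma w)" unfolding w_def
          by (metis diff_add_cancel norm_mult)
        also have "\<dots> \<le> M" using Suc.IH w1 by blast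
        finally have "norm w * norm (rGamma z) \<le> M" .
        moreover have "norm (rGamma z) \<le> norm w * norm (rGamma z)"
          using nw by (simp add: mult_le_cancel_right1)
        ultimately show ?thesis by linarith
      qed
    qed
  qed
  show ?thesis
  proof (rule that)
    show "M \<ge> 0" unfolding M_def by simp
    fix z :: complex assume "1 \<le> Re z" "Im z = y"
    moreover have "Re z \<le> real (nat \<lceil>Re z\<rceil>) + 2" by linarith
    ultimately show "norm (rGamma z) \<le> M" using ind by blast
  qed
qed


lemma integrand_fun:
  "integrandI a n j v = (\<lambda>t. of_nat (fact n) ^ a * rGamma (t + 1) ^ (a - 1) * rGamma (of_nat n - t + 1) ^ a
     * (of_real pi / sin (of_real pi * t)) ^ (j + 1) * exp (\<i> * of_real pi * t * of_real v))"
  by (rule ext) (rule integrand_alt)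

lemma integrand_cont:
  "continuous_on {t. sin (of_real pi * t) \<noteq> 0} (integrandI a n j v)"
  unfolding integrand_fun
  by (intro continuous_at_imp_continuous_on ballI continuous_intros) auto

lemma poch_norm_ge:
  fixes w :: complex
  assumes "1 \<le> Re w"
  shows "Re w \<le> norm (pochhammer w (Suc n))"
proof -
  have g1: "1 \<le> norm (pochhammer z m)" if "1 \<le> Re z" for z :: complex and m
    using that
  proof (induction m arbitrary: z)
    case 0 then show ?case by simp
  next
    case (Suc m)
    have "1 \<le> norm z" using Suc.prems complex_Re_le_cmod[of z] by linarith
    moreover have "1 \<le> norm (pochhammer (z + 1) m)" using Suc.IH[of "z + 1"] Suc.prems by simp
    ultimately have "1 * 1 \<le> norm z * norm (pochhammer (z + 1) m)"
      by (intro mult_mono) auto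
    then show ?case by (simp add: pochhammer_rec norm_mult)
  qed
  have "Re w * 1 \<le> norm w * norm (pochhammer (w + 1) n)"
    using assms g1[of "w + 1" n] complex_Re_le_cmod[of w] by (intro mult_mono) auto
  then show ?thesis by (simp add: pochhammer_rec norm_mult)
qed

lemma key_reflection:
  fixes t :: complex
  shows "rGamma (t + 1) * rGamma (of_nat n - t + 1) * pochhammer (- t) (Suc n) = - sin (of_real pi * t) / of_real pi"
proof -
  have "rGamma (- t) * rGamma (1 - (- t)) = sin (of_real pi * (- t)) / of_real pi"
    by (rule rGamma_reflection_complex)
  moreover have "rGamma (- t) = pochhammer (- t) (Suc n) * rGamma (- t + of_nat (Suc n))"
    by (rule pochhammer_rGamma)
  moreover have "- t + of_nat (Suc n) = of_nat n - t + 1" by simp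
  moreover have "1 - (- t) = t + 1" by simp
  ultimately show ?thesis by (simp add: mult_ac add_ac)
qed


lemma aux_pow:
  fixes S P :: real
  assumes "S \<noteq> 0" "P \<noteq> 0"
  shows "(S / P) ^ k * (P / S) ^ Suc k * S = P"
proof -
  have "(S / P) ^ k * (P / S) ^ k = 1"
    using assms by (simp add: power_mult_distrib[symmetric])
  then show ?thesis using assms by (simp add: field_simps)
qed

lemma tail_bound:
  assumes "a \<ge> 2" "y \<noteq> 0"
  obtains K where "\<And>t. Im t = y \<Longrightarrow> Re t \<le> -1 \<Longrightarrow> norm (integrandI a n (a - 1) v t) \<le> K / (Re t) ^ 2"
proof -
  obtain M where M: "M \<ge> 0" "\<And>z. 1 \<le> Re z \<Longrightarrow> Im z = - y \<Longrightarrow> norm (rGamma z) \<le> M"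
    using rGamma_bounded_line[of "- y"] by blast
  define c where "c = \<bar>exp (pi * y) - exp (- (pi * y))\<bar> / 2"
  have "exp (pi * y) \<noteq> exp (- (pi * y))" using assms(2) by simp
  then have c: "c > 0" unfolding c_def by simp
  define e0 where "e0 = exp (- (pi * v * y))"
  define N where "N = (fact n :: real) ^ a"
  define K where "K = N * pi * e0 * M / c"
  show ?thesis
  proof (rule that)
    fix t :: complex assume ty: "Im t = y" and tr: "Re t \<le> -1"
    define x where "x = - Re t"
    have x1: "1 \<le> x" using tr unfolding x_def by simp
    define s where "s = sin (of_real pi * t)"
    have "\<bar>exp (Im (of_real pi * t)) - exp (- Im (of_real pi * t))\<bar> / 2 \<le> norm s"
      unfolding s_def by (rule norm_sin_lower)
    then have sc: "c \<le> norm s" unfolding c_def using ty by simp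
    then have s0: "norm s > 0" using c by linarith
    define P where "P = pochhammer (- t) (Suc n)"
    have Px: "x \<le> norm P" unfolding P_def x_def using poch_norm_ge[of "- t" n] x1 x_def by simp
    define g1 where "g1 = norm (rGamma (t + 1))"
    define g2 where "g2 = norm (rGamma (of_nat n - t + 1))"
    have key: "g1 * g2 * norm P = norm s / pi"
    proof -
      have "norm (rGamma (t + 1) * rGamma (of_nat n - t + 1) * P) = norm (- s / of_real pi)"
        unfolding P_def s_def by (subst key_reflection) simp
      then show ?thesis unfolding g1_def g2_def by (simp add: norm_mult norm_divide)
    qed
    have g2b: "g2 \<le> M / x"
    proof -
      define w where "w = of_nat n - t"
      have w1: "1 \<le> Re w" "Im w = - y" using x1 ty unfolding w_def x_def by auto
      have nw: "x \<le> norm w" using complex_Re_le_cmod[of w] unfolding w_def x_def by simp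
      have "w * rGamma (w + 1) = rGamma w" by (rule rGamma_plus1)
      then have "norm w * g2 = norm (rGamma w)" unfolding g2_def w_def by (metis norm_mult)
      also have "\<dots> \<le> M" using M(2) w1 by blast
      finally have "norm w * g2 \<le> M" .
      moreover have "x * g2 \<le> norm w * g2" using nw unfolding g2_def by (intro mult_right_mono) auto
      ultimately have "x * g2 \<le> M" by linarith
      then show ?thesis using x1 by (simp add: field_simps)
    qed
    have E: "norm (exp (\<i> * of_real pi * t * of_real v)) = e0"
      unfolding e0_def using ty by simp
    have a1: "a - 1 + 1 = a" using assms by simp
    have nf: "norm (integrandI a n (a - 1) v t) = N * g1 ^ (a - 1) * g2 ^ a * (pi / norm s) ^ a * e0"
      unfolding integrand_alt a1 N_def g1_def g2_def s_def[symmetric] E[symmetric]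
      by (simp add: norm_mult norm_power norm_divide)
    have eq: "norm (integrandI a n (a - 1) v t) * (norm P ^ (a - 1) * norm s) = N * pi * g2 * e0"
    proof -
      have ga: "g2 ^ a = g2 ^ (a - 1) * g2" using a1 by (metis power_add power_one_right)
      have "g1 ^ (a - 1) * g2 ^ a * norm P ^ (a - 1) = (g1 * g2 * norm P) ^ (a - 1) * g2"
        unfolding ga by (simp add: power_mult_distrib mult_ac)
      also have "\<dots> = (norm s / pi) ^ (a - 1) * g2" unfolding key ..
      finally have h: "g1 ^ (a - 1) * g2 ^ a * norm P ^ (a - 1) = (norm s / pi) ^ (a - 1) * g2" .
      have "norm (integrandI a n (a - 1) v t) * (norm P ^ (a - 1) * norm s)
          = N * e0 * (g1 ^ (a - 1) * g2 ^ a * norm P ^ (a - 1)) * (pi / norm s) ^ a * norm s"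
        unfolding nf by (simp add: mult_ac)
      also have "\<dots> = N * e0 * g2 * ((norm s / pi) ^ (a - 1) * (pi / norm s) ^ Suc (a - 1) * norm s)"
        unfolding h using a1 by (simp add: mult_ac)
      also have "\<dots> = N * e0 * g2 * pi"
        using aux_pow[of "norm s" pi "a - 1"] s0 by simp
      finally show ?thesis by (simp add: mult_ac)
    qed
    have P1: "1 \<le> norm P" using Px x1 by linarith
    have "norm P ^ 1 \<le> norm P ^ (a - 1)" using assms P1 by (intro power_increasing) auto
    then have Pa: "x \<le> norm P ^ (a - 1)" using Px by simp
    have den: "x * c \<le> norm P ^ (a - 1) * norm s"
      using Pa sc x1 c by (intro mult_mono) auto
    have den0: "0 < x * c" using x1 c by simp
    have "norm (integrandI a n (a - 1) v t) = N * pi * g2 * e0 / (norm P ^ (a - 1) * norm s)"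
    proof -
      have d0: "norm P ^ (a - 1) * norm s \<noteq> 0" using den den0 by linarith
      show ?thesis using eq d0 by (simp add: eq_divide_eq)
    qed
    also have "\<dots> \<le> N * pi * (M / x) * e0 / (x * c)"
    proof (rule frac_le)
      show "0 \<le> N * pi * (M / x) * e0" unfolding N_def e0_def using M x1 by simp
      show "N * pi * g2 * e0 \<le> N * pi * (M / x) * e0"
        using g2b unfolding N_def e0_def by (intro mult_right_mono mult_left_mono) auto
    qed (use den den0 in auto)
    also have "\<dots> = K / (Re t) ^ 2"
      unfolding K_def x_def using c x1 x_def by (simp add: field_simps power2_eq_square)
    finally show "norm (integrandI a n (a - 1) v t) \<le> K / (Re t) ^ 2" .
  qed
qed


lemma real_tail_conv:
  fixes \<psi> :: "real \<Rightarrow> complex"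
  assumes cont: "continuous_on {b..} \<psi>" and b: "1 \<le> b"
    and bnd: "\<And>s. b \<le> s \<Longrightarrow> norm (\<psi> s) \<le> K / s ^ 2"
  shows "\<exists>L. ((\<lambda>R. integral {b..R} \<psi>) \<longlongrightarrow> L) at_top"
proof -
  have "((\<lambda>x. 1 / x ^ 2) has_integral 1 / (real (2 - 1) * b ^ (2 - 1))) {b..}"
    using b by (intro has_integral_inverse_power_to_inf) auto
  then have "((\<lambda>x. K * (1 / x ^ 2)) has_integral K * (1 / (real (2 - 1) * b ^ (2 - 1)))) {b..}"
    by (rule has_integral_mult_right)
  then have g: "(\<lambda>x. K / x ^ 2) integrable_on {b..}"
    by (auto simp: integrable_on_def)
  have meas: "\<psi> \<in> borel_measurable (lebesgue_on {b..})"
    by (rule continuous_imp_measurable_on_sets_lebesgue[OF cont]) simp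
  have abs: "\<psi> absolutely_integrable_on {b..}"
    by (rule measurable_bounded_by_integrable_imp_absolutely_integrable[OF meas _ g]) (use bnd in auto)
  have lim: "((\<lambda>R. set_lebesgue_integral lebesgue {b..R} \<psi>) \<longlongrightarrow> set_lebesgue_integral lebesgue {b..} \<psi>) at_top"
    by (rule tendsto_set_lebesgue_integral_at_top[OF _ abs]) simp
  have "eventually (\<lambda>R. set_lebesgue_integral lebesgue {b..R} \<psi> = integral {b..R} \<psi>) at_top"
  proof (rule eventually_at_top_linorderI[of b])
    fix R assume "b \<le> R"
    have "\<psi> absolutely_integrable_on {b..R}"
      by (rule set_integrable_subset[OF abs]) auto
    then show "set_lebesgue_integral lebesgue {b..R} \<psi> = integral {b..R} \<psi>"
      by (rule set_lebesgue_integral_eq_integral(2))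
  qed
  with lim have "((\<lambda>R. integral {b..R} \<psi>) \<longlongrightarrow> set_lebesgue_integral lebesgue {b..} \<psi>) at_top"
    by (rule Lim_transform_eventually)
  then show ?thesis by blast
qed


lemma horiz_linepath_integral:
  fixes f :: "complex \<Rightarrow> complex"
  assumes "p < q"
  shows "contour_integral (linepath (Complex p y) (Complex q y)) f =
         integral {p..q} (\<lambda>x. f (of_real x + \<i> * of_real y))"
proof -
  have lp: "linepath (Complex p y) (Complex q y) = (+) (\<i> * of_real y) \<circ> linepath (of_real p) (of_real q)"
    by (rule ext) (simp add: linepath_def complex_eq_iff algebra_simps)
  have "contour_integral (linepath (Complex p y) (Complex q y)) f =
        contour_integral (linepath (of_real p) (of_real q)) (\<lambda>x. f (x + \<i> * of_real y))"
    unfolding lp by (rule contour_integral_translate)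
  also have "\<dots> = integral {Re (of_real p)..Re (of_real q)} (\<lambda>x. f (of_real x + \<i> * of_real y))"
    using assms by (intro contour_integral_linepath_Reals_eq) auto
  finally show ?thesis by simp
qed

lemma ray_conv:
  fixes f :: "complex \<Rightarrow> complex" and y c :: real
  assumes cont: "continuous_on {t. Im t = y} f" and c: "0 \<le> c"
    and bnd: "\<And>t. Im t = y \<Longrightarrow> Re t \<le> -1 \<Longrightarrow> norm (f t) \<le> K / (Re t) ^ 2"
  shows "\<exists>L. ((\<lambda>R. contour_integral (linepath (Complex (-R) y) (Complex c y)) f) \<longlongrightarrow> L) at_top"
proof -
  define h where "h = (\<lambda>x::real. f (of_real x + \<i> * of_real y))"
  define \<psi> where "\<psi> = (\<lambda>s::real. h (- s))"
  have contpsi: "continuous_on UNIV \<psi>"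
    unfolding \<psi>_def h_def
    by (rule continuous_on_compose2[OF cont]) (auto intro!: continuous_intros)
  have bpsi: "norm (\<psi> s) \<le> K / s ^ 2" if "1 \<le> s" for s
    using bnd[of "of_real (- s) + \<i> * of_real y"] that unfolding \<psi>_def h_def by simp
  obtain L0 where L0: "((\<lambda>R. integral {1..R} \<psi>) \<longlongrightarrow> L0) at_top"
    using real_tail_conv[of 1 \<psi> K] contpsi bpsi continuous_on_subset by blast
  have "((\<lambda>R. integral {-c..1} \<psi> + integral {1..R} \<psi>) \<longlongrightarrow> integral {-c..1} \<psi> + L0) at_top"
    by (intro tendsto_intros L0)
  moreover have "eventually (\<lambda>R. integral {-c..1} \<psi> + integral {1..R} \<psi> =
      contour_integral (linepath (Complex (-R) y) (Complex c y)) f) at_top"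
  proof (rule eventually_at_top_linorderI[of 1])
    fix R :: real assume R: "1 \<le> R"
    have "contour_integral (linepath (Complex (-R) y) (Complex c y)) f = integral {-R..c} h"
      unfolding h_def using R c by (intro horiz_linepath_integral) simp
    also have "\<dots> = integral {-c..R} \<psi>"
      using Henstock_Kurzweil_Integration.integral_reflect_real[of R "-c" \<psi>] unfolding \<psi>_def by simp
    also have "\<dots> = integral {-c..1} \<psi> + integral {1..R} \<psi>"
      using R c by (intro Henstock_Kurzweil_Integration.integral_combine[symmetric]
          integrable_continuous_real continuous_on_subset[OF contpsi]) auto
    finally show "integral {-c..1} \<psi> + integral {1..R} \<psi> =
      contour_integral (linepath (Complex (-R) y) (Complex c y)) f" by simp
  qed
  ultimately show ?thesis by (blast intro: Lim_transform_eventually)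
qed


definition DD :: "complex set" where "DD = {t. sin (of_real pi * t) \<noteq> 0}"

lemma seg_horiz_DD:
  assumes "y \<noteq> 0"
  shows "closed_segment (Complex p y) (Complex q y) \<subseteq> DD"
proof
  fix x assume "x \<in> closed_segment (Complex p y) (Complex q y)"
  then have "Im x = y" by (rule segment_Im) simp_all
  then show "x \<in> DD" unfolding DD_def using sin_pi_nonzero[of x 0] assms by auto
qed

lemma seg_vert_DD:
  shows "closed_segment (Complex (real n + 1/2) p) (Complex (real n + 1/2) q) \<subseteq> DD"
proof
  fix x assume "x \<in> closed_segment (Complex (real n + 1/2) p) (Complex (real n + 1/2) q)"
  then have "Re x = real n + 1/2" by (rule segment_Re) simp_all
  then show "x \<in> DD" unfolding DD_def using sin_pi_nonzero[of x n] by auto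
qed

lemma loop_parts:
  assumes cont: "continuous_on DD f"
  shows "f contour_integrable_on loopL n R"
    "contour_integral (loopL n R) f =
       contour_integral (linepath (Complex (-R) (-1/2)) (Complex (real n + 1/2) (-1/2))) f
     + contour_integral (linepath (Complex (real n + 1/2) (-1/2)) (Complex (real n + 1/2) (1/2))) f
     - contour_integral (linepath (Complex (-R) (1/2)) (Complex (real n + 1/2) (1/2))) f"
proof -
  define A where "A = Complex (-R) (-1/2)"
  define B where "B = Complex (real n + 1/2) (-1/2)"
  define C where "C = Complex (real n + 1/2) (1/2)"
  define E where "E = Complex (-R) (1/2)"
  have s1: "closed_segment A B \<subseteq> DD" unfolding A_def B_def by (rule seg_horiz_DD) simp
  have s2: "closed_segment B C \<subseteq> DD" unfolding B_def C_def by (rule seg_vert_DD)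
  have s3: "closed_segment C E \<subseteq> DD" unfolding C_def E_def by (rule seg_horiz_DD) simp
  have c1: "continuous_on (closed_segment A B) f" using cont s1 by (rule continuous_on_subset)
  have c2: "continuous_on (closed_segment B C) f" using cont s2 by (rule continuous_on_subset)
  have c3: "continuous_on (closed_segment C E) f" using cont s3 by (rule continuous_on_subset)
  have i1: "f contour_integrable_on linepath A B" by (rule contour_integrable_continuous_linepath[OF c1])
  have i2: "f contour_integrable_on linepath B C" by (rule contour_integrable_continuous_linepath[OF c2])
  have i3: "f contour_integrable_on linepath C E" by (rule contour_integrable_continuous_linepath[OF c3])
  have v23: "valid_path (linepath B C +++ linepath C E)"
    by (intro valid_path_join) auto
  have i23: "f contour_integrable_on (linepath B C +++ linepath C E)"
    by (intro contour_integrable_joinI i2 i3) auto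
  have lp: "loopL n R = linepath A B +++ (linepath B C +++ linepath C E)"
    unfolding loopL_def A_def B_def C_def E_def ..
  show "f contour_integrable_on loopL n R"
    unfolding lp by (intro contour_integrable_joinI i1 i23 v23) auto
  have "contour_integral (loopL n R) f = contour_integral (linepath A B) f +
      (contour_integral (linepath B C) f + contour_integral (linepath C E) f)"
    unfolding lp using i1 i2 i3 i23 v23 by simp
  also have "contour_integral (linepath C E) f = - contour_integral (linepath E C) f"
    using c3 by (rule contour_integral_reverse_linepath)
  finally show "contour_integral (loopL n R) f =
       contour_integral (linepath (Complex (-R) (-1/2)) (Complex (real n + 1/2) (-1/2))) f
     + contour_integral (linepath (Complex (real n + 1/2) (-1/2)) (Complex (real n + 1/2) (1/2))) f
     - contour_integral (linepath (Complex (-R) (1/2)) (Complex (real n + 1/2) (1/2))) f"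
    unfolding A_def B_def C_def E_def by simp
qed

lemma loop_conv:
  assumes "a \<ge> 2"
  shows "\<exists>L. ((\<lambda>R. contour_integral (loopL n R) (integrandI a n (a - 1) v)) \<longlongrightarrow> L) at_top"
proof -
  define f where "f = integrandI a n (a - 1) v"
  have cont: "continuous_on DD f" unfolding f_def DD_def by (rule integrand_cont)
  have ray: "\<exists>L. ((\<lambda>R. contour_integral (linepath (Complex (-R) y) (Complex (real n + 1/2) y)) f) \<longlongrightarrow> L) at_top"
    if y: "y \<noteq> 0" for y
  proof -
    have sub: "{t. Im t = y} \<subseteq> DD" unfolding DD_def using sin_pi_nonzero[of _ 0] y by auto
    obtain K where K: "\<And>t. Im t = y \<Longrightarrow> Re t \<le> -1 \<Longrightarrow> norm (integrandI a n (a - 1) v t) \<le> K / (Re t) ^ 2"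
      using tail_bound[OF assms y] by blast
    show ?thesis
      by (rule ray_conv[OF continuous_on_subset[OF cont sub], of "real n + 1/2" K]) (use K f_def in auto)
  qed
  obtain L1 where L1: "((\<lambda>R. contour_integral (linepath (Complex (-R) (-1/2)) (Complex (real n + 1/2) (-1/2))) f) \<longlongrightarrow> L1) at_top"
    using ray[of "-1/2"] by auto
  obtain L3 where L3: "((\<lambda>R. contour_integral (linepath (Complex (-R) (1/2)) (Complex (real n + 1/2) (1/2))) f) \<longlongrightarrow> L3) at_top"
    using ray[of "1/2"] by auto
  define V where "V = contour_integral (linepath (Complex (real n + 1/2) (-1/2)) (Complex (real n + 1/2) (1/2))) f"
  have "((\<lambda>R. contour_integral (linepath (Complex (-R) (-1/2)) (Complex (real n + 1/2) (-1/2))) f + V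
        - contour_integral (linepath (Complex (-R) (1/2)) (Complex (real n + 1/2) (1/2))) f) \<longlongrightarrow> L1 + V - L3) at_top"
    by (intro tendsto_intros L1 L3)
  then have "((\<lambda>R. contour_integral (loopL n R) f) \<longlongrightarrow> L1 + V - L3) at_top"
    unfolding loop_parts(2)[OF cont] V_def .
  then show ?thesis unfolding f_def by blast
qed


theorem lemma5:
  fixes a \<mu> n :: nat and u :: real
  assumes "a \<ge> 2" and "\<mu> \<le> a - 1"
  shows "Iint a n \<mu> u =
    1 / (2 * of_real pi * \<i>) ^ (a - \<mu> - 1) *
    (\<Sum>k = 0..a - \<mu> - 1. (-1) ^ k * of_nat ((a - \<mu> - 1) choose k) *
        Iint a n (a - 1) (real a + u - real \<mu> - 1 - 2 * real k))"
proof -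
  define m where "m = a - \<mu> - 1"
  define c :: complex where "c = 1 / (2 * of_real pi * \<i>) ^ m"
  define b :: "nat \<Rightarrow> complex" where "b = (\<lambda>k. (-1) ^ k * of_nat (m choose k))"
  define vv where "vv = (\<lambda>k. real a + u - real \<mu> - 1 - 2 * real k)"
  define G where "G = (\<lambda>k R. contour_integral (loopL n R) (integrandI a n (a - 1) (vv k)))"
  have cont: "continuous_on DD (integrandI a n j v)" for j v
    unfolding DD_def by (rule integrand_cont)
  have pw: "integrandI a n \<mu> u = (\<lambda>t. c * (\<Sum>k = 0..m. b k * integrandI a n (a - 1) (vv k) t))"
    by (rule ext) (unfold c_def b_def vv_def m_def, rule pointwise[OF assms])
  have F: "contour_integral (loopL n R) (integrandI a n \<mu> u) = c * (\<Sum>k = 0..m. b k * G k R)" for R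
  proof -
    have ik: "integrandI a n (a - 1) (vv k) contour_integrable_on loopL n R" for k
      by (rule loop_parts(1)[OF cont])
    have "contour_integral (loopL n R) (integrandI a n \<mu> u)
        = c * contour_integral (loopL n R) (\<lambda>t. \<Sum>k = 0..m. b k * integrandI a n (a - 1) (vv k) t)"
      unfolding pw by (intro contour_integral_lmul contour_integrable_sum contour_integrable_lmul ik) auto
    also have "contour_integral (loopL n R) (\<lambda>t. \<Sum>k = 0..m. b k * integrandI a n (a - 1) (vv k) t)
        = (\<Sum>k = 0..m. contour_integral (loopL n R) (\<lambda>t. b k * integrandI a n (a - 1) (vv k) t))"
      by (intro contour_integral_sum contour_integrable_lmul ik) auto
    also have "\<dots> = (\<Sum>k = 0..m. b k * G k R)"
      unfolding G_def by (intro sum.cong refl contour_integral_lmul ik)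
    finally show ?thesis .
  qed
  have "\<forall>k. \<exists>L. (G k \<longlongrightarrow> L) at_top"
    unfolding G_def using loop_conv[OF assms(1)] by blast
  then obtain Lf where Lf: "\<And>k. (G k \<longlongrightarrow> Lf k) at_top" by metis
  have "((\<lambda>R. c * (\<Sum>k = 0..m. b k * G k R)) \<longlongrightarrow> c * (\<Sum>k = 0..m. b k * Lf k)) at_top"
    by (intro tendsto_intros Lf)
  then have LimF: "Lim at_top (\<lambda>R. contour_integral (loopL n R) (integrandI a n \<mu> u)) = c * (\<Sum>k = 0..m. b k * Lf k)"
    unfolding F by (intro tendsto_Lim) auto
  have LimG: "Lim at_top (G k) = Lf k" for k
    using Lf by (intro tendsto_Lim) auto
  have IG: "Iint a n (a - 1) (vv k) = (1 / (2 * of_real pi * \<i>)) * Lf k" for k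
    unfolding Iint_def LimG[symmetric] G_def ..
  have "Iint a n \<mu> u = (1 / (2 * of_real pi * \<i>)) * (c * (\<Sum>k = 0..m. b k * Lf k))"
    unfolding Iint_def LimF ..
  also have "\<dots> = c * (\<Sum>k = 0..m. b k * ((1 / (2 * of_real pi * \<i>)) * Lf k))"
    by (simp add: sum_distrib_left mult_ac)
  also have "\<dots> = c * (\<Sum>k = 0..m. b k * Iint a n (a - 1) (vv k))"
    unfolding IG ..
  finally show ?thesis unfolding c_def b_def vv_def m_def .
qed

end
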